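(* Consider a platform with effective driver arrival rate $e>0$, driver abandonment rate $\beta>0$, static price $\phi_i\in[0,\phi_h]$, and passenger arrival rate $\lambda_i(\beta)\ge0$, where $\lambda_i(\beta)\to\lambda_i$ as $\beta\to0$. Let $\mathcal D_i(\phi_i;\lambda_i(\beta),\beta)=\bigl(\sum_{n\ge0}\frac{e^n}{\prod_{a=1}^n(\lambda_i(\beta)f(\phi_i)+a\beta)}\bigr)^{-1}$ and $\mathcal M_i(\phi_i;\lambda_i(\beta),\beta)=\lambda_i(\beta)f(\phi_i)\phi_i\bigl(1-\mathcal D_i(\phi_i;\lambda_i(\beta),\beta)\bigr)$. Then as $\beta\to0$, $$\mathcal M_i\to\tilde{\mathcal M}_i(\phi_i)=\begin{cases}e\phi_i&\text{if } \frac{e}{\lambda_i f(\phi_i)}<1,\\ \lambda_i f(\phi_i)\phi_i&\text{otherwise,}\end{cases}\qquad \mathcal D_i\to\tilde{\mathcal D}_i(\phi_i;\lambda_i)=\Bigl(1-\frac{e}{\lambda_i f(\phi_i)}\Bigr)^+.$$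
   Context: $f:[0,\phi_h]\to(0,1]$ is strictly concave, strictly decreasing, differentiable with $f(0)=1$ (passenger acceptance probability of price $\phi$). $\mathcal D_i$ is the stationary probability of no waiting driver and $\mathcal M_i$ the long-run matching revenue rate of a platform where passengers arrive Poisson at rate $\lambda_i(\beta)$ and drivers (effective rate $e$) wait and abandon at rate $\beta$. Convention: $e/0=+\infty$. *)

theory Defs
  imports "HOL-Analysis.Analysis"
begin

definition strictly_concave_on :: "real set \<Rightarrow> (real \<Rightarrow> real) \<Rightarrow> bool" where
  "strictly_concave_on S f \<longleftrightarrow> convex S \<and>
     (\<forall>x\<in>S. \<forall>y\<in>S. x \<noteq> y \<longrightarrow> (\<forall>t::real. 0 < t \<and> t < 1 \<longrightarrow>
        f ((1 - t) * x + t * y) > (1 - t) * f x + t * f y))"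

text \<open>Stationary probability of no waiting driver:
  D = (sum_{n>=0} e^n / prod_{a=1}^n (lam f(phi) + a beta))^{-1}.\<close>
definition Dprob :: "(real \<Rightarrow> real) \<Rightarrow> real \<Rightarrow> real \<Rightarrow> real \<Rightarrow> real \<Rightarrow> real" where
  "Dprob f e phi lam beta =
     inverse (\<Sum>n. e ^ n / (\<Prod>a=1..n. lam * f phi + real a * beta))"

definition Mrev :: "(real \<Rightarrow> real) \<Rightarrow> real \<Rightarrow> real \<Rightarrow> real \<Rightarrow> real \<Rightarrow> real" where
  "Mrev f e phi lam beta = lam * f phi * phi * (1 - Dprob f e phi lam beta)"

text \<open>e / (lam f(phi)) < 1, with the convention e/0 = +infinity (so false when lam f(phi) = 0).\<close>
definition ratio_lt_1 :: "(real \<Rightarrow> real) \<Rightarrow> real \<Rightarrow> real \<Rightarrow> real \<Rightarrow> bool" where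
  "ratio_lt_1 f e phi lam \<longleftrightarrow> lam * f phi \<noteq> 0 \<and> e / (lam * f phi) < 1"

definition Mlim :: "(real \<Rightarrow> real) \<Rightarrow> real \<Rightarrow> real \<Rightarrow> real \<Rightarrow> real" where
  "Mlim f e phi lam = (if ratio_lt_1 f e phi lam then e * phi else lam * f phi * phi)"

text \<open>(1 - e/(lam f(phi)))^+ with e/0 = +infinity, i.e. value 0 when lam f(phi) = 0.\<close>
definition Dlim :: "(real \<Rightarrow> real) \<Rightarrow> real \<Rightarrow> real \<Rightarrow> real \<Rightarrow> real" where
  "Dlim f e phi lam = (if lam * f phi = 0 then 0 else max 0 (1 - e / (lam * f phi)))"

end

theory Submission
  imports Defs
begin

lemma prodpos: fixes c b :: real assumes "c \<ge> 0" "b > 0"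
  shows "0 < (\<Prod>a=1..n. c + real a * b)"
  using assms by (intro prod_pos) (auto simp: add_nonneg_pos)
lemma prodlow: fixes c b :: real assumes "c \<ge> 0" "b > 0"
  shows "fact n * b^n \<le> (\<Prod>a=1..n. c + real a * b)"
proof (induction n)
  case 0 then show ?case by simp
next
  case (Suc n)
  have "fact (Suc n) * b^(Suc n) = (fact n * b^n) * (real (Suc n) * b)" by (simp add: algebra_simps)
  also have "\<dots> \<le> (\<Prod>a=1..n. c + real a * b) * (c + real (Suc n) * b)"
    using Suc assms prodpos[OF assms, of n] by (intro mult_mono) auto
  also have "\<dots> = (\<Prod>a=1..Suc n. c + real a * b)" by (simp add: prod.cl_ivl_Suc)
  finally show ?case .
qed
lemma prodc: fixes c b :: real assumes "c \<ge> 0" "b > 0"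
  shows "c^n \<le> (\<Prod>a=1..n. c + real a * b)"
proof -
  have "c^n = (\<Prod>a=1..n. c)" by simp
  also have "\<dots> \<le> (\<Prod>a=1..n. c + real a * b)" using assms by (intro prod_mono) auto
  finally show ?thesis .
qed
lemma summ: fixes c b e :: real assumes "c \<ge> 0" "b > 0" "e > 0"
  shows "summable (\<lambda>n. e^n / (\<Prod>a=1..n. c + real a * b))"
proof (rule summable_comparison_test)
  show "summable (\<lambda>n. inverse (fact n) * (e/b)^n)" by (rule summable_exp)
  show "\<exists>N. \<forall>n\<ge>N. norm (e^n / (\<Prod>a=1..n. c + real a * b)) \<le> inverse (fact n) * (e/b)^n"
  proof (intro exI allI impI)
    fix n :: nat
    have p: "0 < fact n * b^n" using assms by simp
    have "norm (e^n / (\<Prod>a=1..n. c + real a * b)) = e^n / (\<Prod>a=1..n. c + real a * b)"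
      using assms prodpos[OF assms(1,2), of n] by simp
    also have "\<dots> \<le> e^n / (fact n * b^n)"
      using assms p prodlow[OF assms(1,2), of n] prodpos[OF assms(1,2), of n] by (intro divide_left_mono mult_pos_pos) auto
    also have "\<dots> = inverse (fact n) * (e/b)^n" by (simp add: field_simps power_divide)
    finally show "norm (e^n / (\<Prod>a=1..n. c + real a * b)) \<le> inverse (fact n) * (e/b)^n" .
  qed
qed
lemma partial_le: fixes c b e :: real assumes "c \<ge> 0" "b > 0" "e > 0"
  shows "(\<Sum>n<N. e^n / (\<Prod>a=1..n. c + real a * b)) \<le> (\<Sum>n. e^n / (\<Prod>a=1..n. c + real a * b))"
  using assms prodpos[OF assms(1,2)] by (intro sum_le_suminf summ) (auto intro: less_imp_le)
lemma suminf_ge1: fixes c b e :: real assumes "c \<ge> 0" "b > 0" "e > 0"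
  shows "1 \<le> (\<Sum>n. e^n / (\<Prod>a=1..n. c + real a * b))"
  using partial_le[OF assms, of 1] by simp
lemma suminf_up: fixes c b e :: real assumes "c > e" "b > 0" "e > 0"
  shows "(\<Sum>n. e^n / (\<Prod>a=1..n. c + real a * b)) \<le> c / (c - e)"
proof -
  have c0: "c \<ge> 0" using assms by simp
  have g: "(\<lambda>n. (e/c)^n) sums (1 / (1 - e/c))" using assms by (intro geometric_sums) auto
  have "(\<Sum>n. e^n / (\<Prod>a=1..n. c + real a * b)) \<le> (\<Sum>n. (e/c)^n)"
  proof (rule suminf_le)
    fix n
    have "e^n / (\<Prod>a=1..n. c + real a * b) \<le> e^n / c^n"
      using assms prodc[OF c0 assms(2), of n] prodpos[OF c0 assms(2), of n] by (intro divide_left_mono mult_pos_pos) auto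
    then show "e^n / (\<Prod>a=1..n. c + real a * b) \<le> (e/c)^n" by (simp add: power_divide)
  qed (use summ[OF c0 assms(2,3)] g in \<open>auto simp: sums_iff\<close>)
  also have "\<dots> = 1 / (1 - e/c)" using g sums_iff by blast
  also have "\<dots> = c / (c - e)" using assms by (simp add: field_simps)
  finally show ?thesis .
qed
lemma Dlimit:
  fixes g :: "real \<Rightarrow> real" and c0 e :: real
  assumes g: "(g \<longlongrightarrow> c0) (at_right 0)" and gpos: "\<forall>b>0. g b \<ge> 0" and e: "e > 0"
  shows "((\<lambda>b. inverse (\<Sum>n. e^n / (\<Prod>a=1..n. g b + real a * b))) \<longlongrightarrow>
           (if c0 = 0 then 0 else max 0 (1 - e/c0))) (at_right 0)"
proof -
  define S where "S b = (\<Sum>n. e^n / (\<Prod>a=1..n. g b + real a * b))" for b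
  define P where "P N b = (\<Sum>n<N. e^n / (\<Prod>a=1..n. g b + real a * b))" for N b
  define Dl where "Dl = (if c0 = 0 then 0 else max 0 (1 - e/c0))"
  have evb: "eventually (\<lambda>b::real. b > 0) (at_right 0)"
    by (simp add: eventually_at_right_less)
  have c0: "c0 \<ge> 0"
  proof (rule tendsto_lowerbound[OF g])
    show "eventually (\<lambda>b. 0 \<le> g b) (at_right 0)" using evb by eventually_elim (use gpos in auto)
  qed simp
  have PS: "eventually (\<lambda>b. (\<forall>N. P N b \<le> S b) \<and> 1 \<le> S b \<and> b > 0 \<and> g b \<ge> 0) (at_right 0)"
    using evb
  proof eventually_elim
    case (elim b)
    then show ?case using gpos partial_le[of "g b" b e] suminf_ge1[of "g b" b e] e
      unfolding P_def S_def by auto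
  qed
  have A: "((\<lambda>b. P N b) \<longlongrightarrow> (\<Sum>n<N. (e/c0)^n)) (at_right 0)" if "c0 > 0" for N
  proof -
    have "((\<lambda>b. P N b) \<longlongrightarrow> (\<Sum>n<N. e^n / (\<Prod>a=1..n. c0 + real a * 0))) (at_right 0)"
      unfolding P_def using that
      by (intro tendsto_intros g) (auto intro!: tendsto_ident_at simp: prod_zero_iff)
    then show ?thesis by (simp add: power_divide)
  qed
  show ?thesis
    unfolding S_def[symmetric] Dl_def[symmetric]
  proof (rule order_tendstoI)
    fix y assume y: "Dl < y"
    then have y0: "y > 0" unfolding Dl_def by (auto split: if_splits)
    have "eventually (\<lambda>b. 1/y < S b) (at_right 0)"
    proof (cases "c0 = 0")
      case True
      have "((\<lambda>b. g b + b) \<longlongrightarrow> 0) (at_right 0)"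
        using g True by (auto intro!: tendsto_add_zero tendsto_ident_at)
      then have "eventually (\<lambda>b. g b + b < e * y) (at_right 0)"
        using e y0 by (intro order_tendstoD(2)) auto
      with PS show ?thesis
      proof eventually_elim
        case (elim b)
        have x: "0 < g b + b" using elim by auto
        have "1/y < e / (g b + b)" using elim x e y0 by (simp add: field_simps)
        also have "\<dots> \<le> P 2 b" unfolding P_def by (simp add: numeral_2_eq_2)
        also have "\<dots> \<le> S b" using elim by auto
        finally show ?case .
      qed
    next
      case False
      with c0 have cp: "c0 > 0" by simp
      obtain N where N: "1/y < (\<Sum>n<N. (e/c0)^n)"
      proof (cases "e < c0")
        case True
        have q: "norm (e/c0) < 1" using True e cp by simp
        have "Dl = 1 - e/c0" using True cp unfolding Dl_def by auto
        moreover have "0 < 1 - e/c0" using True cp by simp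
        ultimately have "1/y < 1/(1 - e/c0)" using y
          by (intro divide_strict_left_mono) auto
        moreover have "(\<lambda>N. \<Sum>n<N. (e/c0)^n) \<longlonglongrightarrow> 1/(1 - e/c0)"
          using geometric_sums[OF q] by (simp add: sums_def)
        ultimately have "eventually (\<lambda>N. 1/y < (\<Sum>n<N. (e/c0)^n)) sequentially"
          by (intro order_tendstoD(1))
        then show ?thesis using that by (auto simp: eventually_sequentially)
      next
        case False
        have q: "1 \<le> e/c0" using False cp by simp
        obtain N :: nat where NN: "1/y < real N" using reals_Archimedean2 by blast
        have "real N = (\<Sum>n<N. (1::real))" by simp
        also have "\<dots> \<le> (\<Sum>n<N. (e/c0)^n)" using q by (intro sum_mono one_le_power)
        finally have "real N \<le> (\<Sum>n<N. (e/c0)^n)" .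
        with NN have "1/y < (\<Sum>n<N. (e/c0)^n)" by linarith
        then show ?thesis by (rule that)
      qed
      have "eventually (\<lambda>b. 1/y < P N b) (at_right 0)"
        using A[OF cp, of N] N by (intro order_tendstoD(1))
      with PS show ?thesis by eventually_elim (auto intro: less_le_trans)
    qed
    with PS show "eventually (\<lambda>b. inverse (S b) < y) (at_right 0)"
    proof eventually_elim
      case (elim b)
      have "inverse (S b) < inverse (1/y)"
        using elim y0 by (intro less_imp_inverse_less) auto
      then show ?case using y0 by simp
    qed
  next
    fix y assume y: "y < Dl"
    show "eventually (\<lambda>b. y < inverse (S b)) (at_right 0)"
    proof (cases "c0 > e")
      case False
      then have "Dl = 0" unfolding Dl_def using c0 e by auto
      with y have y0: "y < 0" by simp
      from PS show ?thesis proof eventually_elim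
        case (elim b)
        then have "0 < inverse (S b)" by simp
        with y0 show ?case by linarith
      qed
    next
      case True
      then have cp: "c0 > 0" using e by simp
      have D: "Dl = 1 - e/c0" using True cp unfolding Dl_def by auto
      have "eventually (\<lambda>b. g b > e) (at_right 0)"
        using g True by (intro order_tendstoD(1))
      moreover have "eventually (\<lambda>b. y < 1 - e / g b) (at_right 0)"
        using y D cp by (intro order_tendstoD(1)) (auto intro!: tendsto_intros g)
      ultimately show ?thesis using PS
      proof eventually_elim
        case (elim b)
        have "S b \<le> g b / (g b - e)" unfolding S_def using elim e by (intro suminf_up) auto
        then have "inverse (g b / (g b - e)) \<le> inverse (S b)"
          using elim by (intro le_imp_inverse_le) auto
        moreover have "inverse (g b / (g b - e)) = 1 - e / g b" using elim e by (simp add: field_simps)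
        ultimately show ?case using elim by linarith
      qed
    qed
  qed
qed

theorem lemma4:
  fixes f :: "real \<Rightarrow> real" and phi_h e phi lam :: real and lamb :: "real \<Rightarrow> real"
  assumes "phi_h > 0"
    and "strictly_concave_on {0..phi_h} f"
    and "strict_antimono_on {0..phi_h} f"
    and "f differentiable_on {0..phi_h}"
    and "f 0 = 1"
    and "\<forall>x\<in>{0..phi_h}. 0 < f x \<and> f x \<le> 1"
    and "e > 0"
    and "phi \<in> {0..phi_h}"
    and "\<forall>beta>0. lamb beta \<ge> 0"
    and "(lamb \<longlongrightarrow> lam) (at_right 0)"
  shows "((\<lambda>beta. Mrev f e phi (lamb beta) beta) \<longlongrightarrow> Mlim f e phi lam) (at_right 0) \<and>
         ((\<lambda>beta. Dprob f e phi (lamb beta) beta) \<longlongrightarrow> Dlim f e phi lam) (at_right 0)"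
proof -
  have fp: "f phi > 0" using assms(6,8) by auto
  have D: "((\<lambda>beta. Dprob f e phi (lamb beta) beta) \<longlongrightarrow> Dlim f e phi lam) (at_right 0)"
    unfolding Dprob_def Dlim_def
    using Dlimit[of "\<lambda>b. lamb b * f phi" "lam * f phi" e] assms(7,9,10) fp
    by (auto intro!: tendsto_intros)
  have "((\<lambda>beta. Mrev f e phi (lamb beta) beta) \<longlongrightarrow> lam * f phi * phi * (1 - Dlim f e phi lam)) (at_right 0)"
    unfolding Mrev_def by (intro tendsto_intros D assms(10))
  moreover have "lam * f phi * phi * (1 - Dlim f e phi lam) = Mlim f e phi lam"
  proof (cases "ratio_lt_1 f e phi lam")
    case True
    then have ne: "lam * f phi \<noteq> 0" and lt: "e / (lam * f phi) < 1" unfolding ratio_lt_1_def by auto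
    have "Dlim f e phi lam = 1 - e / (lam * f phi)" unfolding Dlim_def using ne lt by auto
    then have "lam * f phi * phi * (1 - Dlim f e phi lam) = lam * f phi * phi * (e / (lam * f phi))" by simp
    also have "\<dots> = e * phi" using ne by (simp add: field_simps)
    finally show ?thesis using True unfolding Mlim_def by simp
  next
    case False
    have "Dlim f e phi lam = 0 \<or> lam * f phi = 0"
      using False unfolding Dlim_def ratio_lt_1_def by auto
    then show ?thesis using False unfolding Mlim_def by auto
  qed
  ultimately show ?thesis using D by simp
qed

end
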